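(* Let $\mu$ be any example distribution. If $\mu$ has finite support, then $\preceq^{\mu}$ is well-founded. This does not necessarily hold when $\mu$ has infinite support: there exists an example distribution $\mu$ with infinite support such that $\preceq^{\mu}$ is not well-founded.
   Context: Data examples are pairs $(I,\mathbf a)$ with $I$ a finite database instance and $\mathbf a$ a tuple of its values. CQs are $q(x_1,\dots,x_k)\text{ :- }\alpha_1,\dots,\alpha_n$ (relational atoms, no constants, each answer variable in some atom); $[\![q]\!]$ is the set of data examples $(I,\mathbf a)$ with $\mathbf a\in q(I)$. An example distribution is a discrete probability distribution $\mu$ over data examples. $\mathrm{dist}_\mu(q,q')=\mu([\![q]\!]\oplus[\![q']\!])$ ($\oplus$ symmetric difference), i.e. the probability of drawing an example on which $q$ and $q'$ disagree. $q'\preceq^{\mu}_q q''$ iff $\mathrm{dist}_\mu(q,q')\le\mathrm{dist}_\mu(q,q'')$. The pre-order family $\preceq^\mu$ is well-founded if for every CQ $q$, every non-empty set of CQs has a $\preceq^\mu_q$-minimal element (equivalently, there is no infinite strictly descending chain $\cdots\prec_q q_2\prec_q q_1\prec_q q_0$, where $\prec_q$ is the strict part of $\preceq^\mu_q$). *)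

theory Defs
  imports "HOL-Probability.Probability_Mass_Function"
begin

type_synonym ('r, 'v) fact = "'r \<times> 'v list"
type_synonym ('r, 'v) inst = "('r, 'v) fact set"
type_synonym ('r, 'v) example = "('r, 'v) inst \<times> 'v list"
text \<open>A CQ: the list of answer variables and the list of relational atoms.\<close>
type_synonym 'r cq = "nat list \<times> ('r \<times> nat list) list"

definition adom :: "('r, 'v) inst \<Rightarrow> 'v set" where
  "adom I = (\<Union>f\<in>I. set (snd f))"

definition is_instance :: "('r \<Rightarrow> nat) \<Rightarrow> ('r, 'v) inst \<Rightarrow> bool" where
  "is_instance ar I \<longleftrightarrow> finite I \<and> (\<forall>f\<in>I. length (snd f) = ar (fst f))"

definition is_data_example :: "('r \<Rightarrow> nat) \<Rightarrow> ('r, 'v) example \<Rightarrow> bool" where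
  "is_data_example ar e \<longleftrightarrow> is_instance ar (fst e) \<and> set (snd e) \<subseteq> adom (fst e)"

definition is_cq :: "('r \<Rightarrow> nat) \<Rightarrow> 'r cq \<Rightarrow> bool" where
  "is_cq ar q \<longleftrightarrow> (\<forall>\<alpha>\<in>set (snd q). length (snd \<alpha>) = ar (fst \<alpha>))
      \<and> set (fst q) \<subseteq> (\<Union>\<alpha>\<in>set (snd q). set (snd \<alpha>))"

definition cq_answers :: "'r cq \<Rightarrow> ('r, 'v) inst \<Rightarrow> 'v list set" where
  "cq_answers q I = {a. \<exists>h :: nat \<Rightarrow> 'v.
      (\<forall>\<alpha>\<in>set (snd q). (fst \<alpha>, map h (snd \<alpha>)) \<in> I) \<and> a = map h (fst q)}"

definition cq_sem :: "('r \<Rightarrow> nat) \<Rightarrow> 'r cq \<Rightarrow> ('r, 'v) example set" where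
  "cq_sem ar q = {e. is_data_example ar e \<and> snd e \<in> cq_answers q (fst e)}"

definition example_distribution :: "('r \<Rightarrow> nat) \<Rightarrow> ('r, 'v) example pmf \<Rightarrow> bool" where
  "example_distribution ar \<mu> \<longleftrightarrow> set_pmf \<mu> \<subseteq> {e. is_data_example ar e}"

definition sym_diff :: "'a set \<Rightarrow> 'a set \<Rightarrow> 'a set" where
  "sym_diff A B = (A - B) \<union> (B - A)"

definition cq_dist :: "('r \<Rightarrow> nat) \<Rightarrow> ('r, 'v) example pmf \<Rightarrow> 'r cq \<Rightarrow> 'r cq \<Rightarrow> real" where
  "cq_dist ar \<mu> q q' = measure_pmf.prob \<mu> (sym_diff (cq_sem ar q) (cq_sem ar q'))"

definition cq_preceq :: "('r \<Rightarrow> nat) \<Rightarrow> ('r, 'v) example pmf \<Rightarrow> 'r cq \<Rightarrow> 'r cq \<Rightarrow> 'r cq \<Rightarrow> bool" where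
  "cq_preceq ar \<mu> q q' q'' \<longleftrightarrow> cq_dist ar \<mu> q q' \<le> cq_dist ar \<mu> q q''"

definition cq_prec :: "('r \<Rightarrow> nat) \<Rightarrow> ('r, 'v) example pmf \<Rightarrow> 'r cq \<Rightarrow> 'r cq \<Rightarrow> 'r cq \<Rightarrow> bool" where
  "cq_prec ar \<mu> q q' q'' \<longleftrightarrow> cq_preceq ar \<mu> q q' q'' \<and> \<not> cq_preceq ar \<mu> q q'' q'"

definition preceq_well_founded :: "('r \<Rightarrow> nat) \<Rightarrow> ('r, 'v) example pmf \<Rightarrow> bool" where
  "preceq_well_founded ar \<mu> \<longleftrightarrow>
     (\<forall>q. is_cq ar q \<longrightarrow>
        (\<forall>S. S \<noteq> {} \<and> S \<subseteq> {q'. is_cq ar q'} \<longrightarrow>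
           (\<exists>m\<in>S. \<forall>q''\<in>S. \<not> cq_prec ar \<mu> q q'' m)))"

end

theory Submission
  imports Defs
begin

lemma part1:
  fixes \<mu> :: "('r, 'v) example pmf"
  assumes fin: "finite (set_pmf \<mu>)"
  shows "preceq_well_founded ar \<mu>"
  unfolding preceq_well_founded_def
proof (intro allI impI)
  fix q S assume "is_cq ar q" and S: "S \<noteq> {} \<and> S \<subseteq> {q'. is_cq ar q'}"
  let ?d = "\<lambda>q'. cq_dist ar \<mu> q q'"
  have "?d ` S \<subseteq> (\<lambda>B. measure_pmf.prob \<mu> B) ` Pow (set_pmf \<mu>)"
  proof
    fix x assume "x \<in> ?d ` S"
    then obtain q' where "x = ?d q'" by auto
    then have "x = measure_pmf.prob \<mu> (sym_diff (cq_sem ar q) (cq_sem ar q') \<inter> set_pmf \<mu>)"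
      unfolding cq_dist_def by (simp add: measure_Int_set_pmf)
    then show "x \<in> (\<lambda>B. measure_pmf.prob \<mu> B) ` Pow (set_pmf \<mu>)" by blast
  qed
  then have finD: "finite (?d ` S)" using fin by (meson finite_Pow_iff finite_imageI finite_subset)
  have ne: "?d ` S \<noteq> {}" using S by auto
  have "Min (?d ` S) \<in> ?d ` S" using finD ne by (rule Min_in)
  then obtain m where m: "m \<in> S" "?d m = Min (?d ` S)" by auto
  have "\<forall>q''\<in>S. \<not> cq_prec ar \<mu> q q'' m"
  proof
    fix q'' assume "q'' \<in> S"
    then have "?d m \<le> ?d q''" using m finD by simp
    then show "\<not> cq_prec ar \<mu> q q'' m" unfolding cq_prec_def cq_preceq_def by simp
  qed
  then show "\<exists>m\<in>S. \<forall>q''\<in>S. \<not> cq_prec ar \<mu> q q'' m" using m by blast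
qed

definition Ik :: "nat \<Rightarrow> (nat, nat) inst" where
  "Ik k = (\<lambda>j. (j, [0])) ` {1..k}"

definition qn :: "nat \<Rightarrow> nat cq" where
  "qn n = ([], [(Suc n, [0])])"

definition q0 :: "nat cq" where
  "q0 = ([], [(0, [0])])"

definition ar1 :: "nat \<Rightarrow> nat" where "ar1 = (\<lambda>_. 1)"

definition mu :: "(nat, nat) example pmf" where
  "mu = map_pmf (\<lambda>k. (Ik k, [])) (geometric_pmf (1/2))"

lemma de_Ik: "is_data_example ar1 (Ik k, [])"
  unfolding is_data_example_def is_instance_def Ik_def ar1_def by auto

lemma ans_single: "([] \<in> cq_answers ([], [(n, [0])]) I) \<longleftrightarrow> (\<exists>v. (n, [v]) \<in> I)"
  unfolding cq_answers_def by auto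

lemma preimage: "(\<lambda>k. (Ik k, [])) -` sym_diff (cq_sem ar1 q0) (cq_sem ar1 (qn n))
   = {k. n < k}"
proof -
  have a: "(Ik k, []) \<in> cq_sem ar1 (qn n) \<longleftrightarrow> n < k" for k
  proof -
    have "n < k \<Longrightarrow> (Suc n, [0]) \<in> Ik k" unfolding Ik_def by (rule image_eqI[of _ _ "Suc n"]) auto
    moreover have "(Suc n, [v]) \<in> Ik k \<Longrightarrow> n < k" for v unfolding Ik_def by auto
    ultimately have "(\<exists>v. (Suc n, [v]) \<in> Ik k) \<longleftrightarrow> n < k" by blast
    moreover have "(Ik k, []) \<in> cq_sem ar1 (qn n) \<longleftrightarrow> (\<exists>v. (Suc n, [v]) \<in> Ik k)"
      using de_Ik[of k] ans_single[of "Suc n" "Ik k"] by (simp only: mem_Collect_eq cq_sem_def qn_def fst_conv snd_conv simp_thms)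
    ultimately show ?thesis by simp
  qed
  have b: "(Ik k, []) \<notin> cq_sem ar1 q0" for k
  proof -
    have "\<not> (\<exists>v. (0, [v]) \<in> Ik k)" unfolding Ik_def by auto
    then show ?thesis using ans_single[of 0 "Ik k"]
      by (simp only: mem_Collect_eq cq_sem_def q0_def fst_conv snd_conv simp_thms)
  qed
  show ?thesis unfolding sym_diff_def using a b by auto
qed

lemma dist_eq: "cq_dist ar1 mu q0 (qn n) = measure_pmf.prob (geometric_pmf (1/2)) {k. n < k}"
  unfolding cq_dist_def mu_def by (simp add: preimage)

lemma dist_dec: "cq_dist ar1 mu q0 (qn (Suc n)) < cq_dist ar1 mu q0 (qn n)"
proof -
  let ?p = "geometric_pmf (1/2)"
  have split: "{k. n < k} = {Suc n} \<union> {k. Suc n < k}" by auto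
  have "measure_pmf.prob ?p {k. n < k} = measure_pmf.prob ?p {Suc n} + measure_pmf.prob ?p {k. Suc n < k}"
    unfolding split by (rule measure_pmf.finite_measure_Union) auto
  moreover have "measure_pmf.prob ?p {Suc n} > 0"
    using set_pmf_geometric[of "1/2"] by (simp add: measure_pmf_single pmf_positive)
  ultimately show ?thesis by (simp add: dist_eq)
qed

lemma part2: "example_distribution ar1 mu \<and> infinite (set_pmf mu) \<and> \<not> preceq_well_founded ar1 mu"
proof (intro conjI)
  show "example_distribution ar1 mu"
    unfolding example_distribution_def mu_def using de_Ik by auto
  have inj: "inj (\<lambda>k. (Ik k, ([]::nat list)))"
  proof (rule injI)
    fix x y assume "(Ik x, ([]::nat list)) = (Ik y, [])"
    then have "Ik x = Ik y" by simp
    then have "card (Ik x) = card (Ik y)" by simp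
    moreover have "card (Ik k) = k" for k unfolding Ik_def
      by (subst card_image) (auto intro: inj_onI)
    ultimately show "x = y" by simp
  qed
  have "set_pmf mu = range (\<lambda>k. (Ik k, []))"
    unfolding mu_def using set_pmf_geometric[of "1/2"] by simp
  then show "infinite (set_pmf mu)" using inj by (simp add: range_inj_infinite)
  show "\<not> preceq_well_founded ar1 mu"
  proof
    assume wf: "preceq_well_founded ar1 mu"
    have cq: "is_cq ar1 q0" unfolding is_cq_def q0_def ar1_def by simp
    have "range qn \<noteq> {} \<and> range qn \<subseteq> {q'. is_cq ar1 q'}"
      unfolding is_cq_def qn_def ar1_def by auto
    then obtain m where m: "m \<in> range qn" and
      min: "\<forall>q''\<in>range qn. \<not> cq_prec ar1 mu q0 q'' m"
    proof -
      have "\<forall>S. S \<noteq> {} \<and> S \<subseteq> {q'. is_cq ar1 q'} \<longrightarrow> (\<exists>m\<in>S. \<forall>q''\<in>S. \<not> cq_prec ar1 mu q0 q'' m)"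
        by (rule mp[OF spec[OF wf[unfolded preceq_well_founded_def], of q0] cq])
      from mp[OF spec[OF this, of "range qn"] \<open>range qn \<noteq> {} \<and> range qn \<subseteq> {q'. is_cq ar1 q'}\<close>]
      have "\<exists>m\<in>range qn. \<forall>q''\<in>range qn. \<not> cq_prec ar1 mu q0 q'' m" .
      then show ?thesis using that by (elim bexE)
    qed
    then obtain i where i: "m = qn i" by auto
    have "cq_prec ar1 mu q0 (qn (Suc i)) m"
      unfolding i cq_prec_def cq_preceq_def using dist_dec[of i] by simp
    then show False using min by blast
  qed
qed

theorem proposition52:
  fixes ar :: "'r \<Rightarrow> nat"
  shows "(\<forall>\<mu> :: ('r, 'v) example pmf.
            example_distribution ar \<mu> \<and> finite (set_pmf \<mu>) \<longrightarrow> preceq_well_founded ar \<mu>)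
       \<and> (\<exists>(ar' :: nat \<Rightarrow> nat) (\<mu> :: (nat, nat) example pmf).
            example_distribution ar' \<mu> \<and> infinite (set_pmf \<mu>) \<and> \<not> preceq_well_founded ar' \<mu>)"
  using part1 part2 by blast

end
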